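(* Let $f\in\mathcal{B}$ satisfy $\|f-f_0\|_{\mathcal{B}}<\frac14$, where $f_0=10\cosh-12$. Then $f\colon\mathbb{D}\to f(\mathbb{D})$ is a quadratic-like map and $f(0)\in(-\infty,-1)$.
   Context: $\mathcal{B}$ is the real Banach space of real and even entire maps $f$ (i.e. $f(\bar z)=\overline{f(z)}$, $f(-z)=f(z)$) such that the sequence $(f^{(j)}(0))_{j\ge0}$ is bounded, with norm $\|f\|_{\mathcal{B}}=\sup_{j\ge0}|f^{(j)}(0)|$; $f_0$ is the map $z\mapsto10\cosh(z)-12$. $\mathbb{D}$ is the open unit disk. A quadratic-like map is a holomorphic proper map $f\colon V\to W$ of degree $2$, where $V,W$ are nonempty simply connected open subsets of $\mathbb{C}$ with $V$ relatively compact in $W$. *)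

theory Defs
  imports "HOL-Complex_Analysis.Complex_Analysis"
begin

definition in_B :: "(complex \<Rightarrow> complex) \<Rightarrow> bool" where
  "in_B f \<longleftrightarrow> f holomorphic_on UNIV
     \<and> (\<forall>z. f (cnj z) = cnj (f z))
     \<and> (\<forall>z. f (- z) = f z)
     \<and> bounded (range (\<lambda>j. (deriv ^^ j) f 0))"

definition B_norm :: "(complex \<Rightarrow> complex) \<Rightarrow> real" where
  "B_norm f = (SUP j. cmod ((deriv ^^ j) f 0))"

definition f0 :: "complex \<Rightarrow> complex" where
  "f0 z = 10 * cosh z - 12"

text \<open>Holomorphic proper map of degree 2 from V onto W (multiplicities counted by zorder).\<close>
definition quadratic_like :: "(complex \<Rightarrow> complex) \<Rightarrow> complex set \<Rightarrow> complex set \<Rightarrow> bool" where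
  "quadratic_like f V W \<longleftrightarrow>
     V \<noteq> {} \<and> W \<noteq> {} \<and> open V \<and> open W \<and> simply_connected V \<and> simply_connected W
     \<and> compact (closure V) \<and> closure V \<subseteq> W
     \<and> f holomorphic_on V \<and> f ` V \<subseteq> W
     \<and> (\<forall>K. compact K \<and> K \<subseteq> W \<longrightarrow> compact {z \<in> V. f z \<in> K})
     \<and> (\<forall>w\<in>W. finite {z \<in> V. f z = w}
            \<and> (\<Sum>z\<in>{z \<in> V. f z = w}. zorder (\<lambda>x. f x - w) z) = 2)"

end

theory Submission
  imports Defs
begin


lemma fact_bound: "6 * 4^i \<le> (fact (i+3)::nat)"
proof (induction i)
  case 0 then show ?case by (simp add: eval_nat_numeral)
next
  case (Suc i)
  have "(6::nat) * 4 ^ Suc i = 4 * (6 * 4^i)" by simp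
  also have "\<dots> \<le> 4 * fact (i+3)" using Suc by simp
  also have "\<dots> \<le> (Suc i + 3) * fact (i+3)" by (intro mult_right_mono) auto
  also have "\<dots> = fact (Suc i + 3)"
  proof -
    have h: "Suc i + 3 = Suc (i+3)" by simp
    show ?thesis unfolding h fact_Suc[of "i+3"] by simp
  qed
  finally show ?case .
qed

lemma coef_bound:
  fixes i :: nat
  shows "real (i+4) / 2 / fact (i+4) \<le> (1/12) * (1/4)^i"
proof -
  have h: "Suc (i+3) = i+4" by simp
  have "(fact (Suc (i+3))::real) = real (Suc(i+3)) * fact (i+3)" by (rule fact_Suc)
  hence "fact (i+4) = real (i+4) * (fact (i+3)::real)" unfolding h .
  hence "real (i+4) / 2 / fact (i+4) = real(i+4) / (real(i+4) * (2*fact(i+3)))" by simp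
  also have "\<dots> = 1 / (2 * fact (i+3))" by (rule nonzero_divide_mult_cancel_left) simp
  finally have e: "real (i+4) / 2 / fact (i+4) = 1 / (2 * fact (i+3))" .
  have "real (6 * 4^i) \<le> fact (i+3)" using fact_bound[of i] by (metis of_nat_fact of_nat_le_iff)
  hence "12 * 4^i \<le> 2 * (fact (i+3)::real)" by simp
  thus ?thesis unfolding e by (simp add: field_simps power_divide)
qed

lemma f0_analytic: "f0 analytic_on UNIV"
  unfolding f0_def[abs_def] by (intro analytic_intros)

lemma f0_holo: "f0 holomorphic_on UNIV"
  using f0_analytic analytic_imp_holomorphic by blast

lemma f0_higher: "(deriv ^^ Suc n) f0 = (\<lambda>z. 10 * (if odd n then cosh z else sinh z))"
proof (induction n)
  case 0
  show ?case
  proof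
    fix z :: complex
    have "(f0 has_field_derivative 10 * sinh z) (at z)"
      unfolding f0_def[abs_def] by (auto intro!: derivative_eq_intros)
    thus "(deriv ^^ Suc 0) f0 z = 10 * (if odd 0 then cosh z else sinh z)"
      by (simp add: DERIV_imp_deriv)
  qed
next
  case (Suc n)
  show ?case
  proof
    fix z :: complex
    have "((\<lambda>z. 10 * (if odd n then cosh z else sinh z)) has_field_derivative
           10 * (if odd (Suc n) then cosh z else sinh z)) (at z)"
      by (cases "odd n") (auto intro!: derivative_eq_intros)
    thus "(deriv ^^ Suc (Suc n)) f0 z = 10 * (if odd (Suc n) then cosh z else sinh z)"
      using Suc by (simp add: DERIV_imp_deriv)
  qed
qed

lemma f0_d0: "(deriv ^^ 0) f0 0 = -2" by (simp add: f0_def)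
lemma f0_d2: "(deriv ^^ 2) f0 0 = 10"
  using f0_higher[of 1] by (simp add: numeral_2_eq_2)
lemma f0_dn: "n \<ge> 1 \<Longrightarrow> cmod ((deriv ^^ n) f0 0) \<le> 10"
  using f0_higher[of "n - 1"] by (cases n) auto


lemma key:
  fixes f :: "complex \<Rightarrow> complex"
  assumes hol: "f holomorphic_on UNIV" and ev: "\<And>z. f (-z) = f z"
    and bd: "\<And>n. n \<ge> 1 \<Longrightarrow> cmod ((deriv^^n) f 0) \<le> 41/4"
    and z: "cmod z \<le> 1" and w: "cmod w \<le> 1"
  shows "cmod (f z - f w - (deriv^^2) f 0 / 2 * (z^2 - w^2)) \<le> 41/36 * cmod (z^2 - w^2)"
proof -
  define c where "c n = (deriv^^n) f 0 / fact n" for n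
  have ser: "(\<lambda>n. c n * x^n) sums f x" for x
  proof -
    have "(\<lambda>n. (deriv ^^ n) f 0 / fact n * (x - 0)^n) sums f x"
      by (rule holomorphic_power_series[where r="cmod x + 1"]) (use hol in \<open>auto intro: holomorphic_on_subset\<close>)
    thus ?thesis by (simp add: c_def)
  qed
  define e where "e n = (if even n then c n else 0)" for n
  have ser2: "(\<lambda>n. e n * x^n) sums f x" for x
  proof -
    have "(\<lambda>n. (c n * x^n + c n * (-x)^n) / 2) sums ((f x + f (-x))/2)"
      by (intro sums_divide sums_add ser)
    moreover have "(\<lambda>n. (c n * x^n + c n * (-x)^n)/2) = (\<lambda>n. e n * x^n)"
      by (auto simp: e_def fun_eq_iff)
    ultimately show ?thesis using ev by simp
  qed
  have "(\<lambda>n. e n * x^n - e n * y^n) sums (f x - f y)" for x y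
    by (intro sums_diff ser2)
  hence "(\<lambda>n. e n * (z^n - w^n)) sums (f z - f w)" by (simp add: right_diff_distrib)
  hence T: "(\<lambda>i. e (i+4) * (z^(i+4) - w^(i+4))) sums (f z - f w - (\<Sum>i<4. e i*(z^i - w^i)))"
    by (rule sums_split_initial_segment)
  have s4: "(\<Sum>i<4. e i * (z^i - w^i)) = (deriv^^2) f 0 / 2 * (z^2 - w^2)"
  proof -
    have e3: "e (Suc (Suc (Suc 0))) = 0" by (simp add: e_def)
    have e1: "e (Suc 0) = 0" by (simp add: e_def)
    have e2: "e (Suc (Suc 0)) = (deriv^^2) f 0 / 2" by (simp add: e_def c_def eval_nat_numeral)
    show ?thesis by (simp add: eval_nat_numeral e1 e2 e3 del: funpow.simps)
  qed
  define C where "C = cmod (z^2 - w^2)"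
  have C0: "C \<ge> 0" by (simp add: C_def)
  have B: "norm (e (i+4) * (z^(i+4) - w^(i+4))) \<le> (41/48) * (1/4)^i * C" for i
  proof (cases "even (i+4)")
    case False
    thus ?thesis using C0 by (simp add: e_def)
  next
    case True
    then obtain k where k: "i+4 = 2*k" by (metis evenE)
    have "cmod (c (i+4)) = cmod ((deriv^^(i+4)) f 0) / fact (i+4)"
      by (simp add: c_def norm_divide)
    also have "\<dots> \<le> (41/4) / fact (i+4)"
      by (intro divide_right_mono bd) auto
    finally have c1: "cmod (c (i+4)) \<le> (41/4) / fact (i+4)" .
    have z2: "norm (z^2) \<le> 1" using z by (simp add: norm_power power_le_one)
    have w2: "norm (w^2) \<le> 1" using w by (simp add: norm_power power_le_one)
    have "cmod (z^(i+4) - w^(i+4)) = cmod ((z^2)^k - (w^2)^k)" by (simp add: k power_mult)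
    also have "\<dots> \<le> k * C" unfolding C_def by (rule norm_power_diff[OF z2 w2])
    finally have p1: "cmod (z^(i+4) - w^(i+4)) \<le> (real (i+4) / 2) * C" by (simp add: k)
    have "norm (e (i+4) * (z^(i+4) - w^(i+4))) = cmod (c (i+4)) * cmod (z^(i+4) - w^(i+4))"
      using True by (simp add: e_def norm_mult)
    also have "\<dots> \<le> ((41/4) / fact (i+4)) * ((real (i+4) / 2) * C)"
      by (intro mult_mono c1 p1) auto
    also have "\<dots> = (41/4) * (real (i+4) / 2 / fact (i+4)) * C" by simp
    also have "\<dots> \<le> (41/4) * ((1/12) * (1/4)^i) * C"
      by (intro mult_right_mono mult_left_mono coef_bound C0) auto
    finally show ?thesis by simp
  qed
  have G: "(\<lambda>i. (41/48) * (1/4)^i * C) sums ((41/48) * (4/3) * C)"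
  proof -
    have "(\<lambda>i. (1/4::real)^i) sums (1 / (1 - 1/4))" by (rule geometric_sums) simp
    hence "(\<lambda>i. (1/4::real)^i) sums (4/3)" by simp
    thus ?thesis by (intro sums_mult2 sums_mult)
  qed
  define t where "t i = e (i+4) * (z^(i+4) - w^(i+4))" for i
  have sn: "summable (\<lambda>i. norm (t i))"
    by (rule summable_comparison_test'[OF sums_summable[OF G]]) (use B in \<open>simp add: t_def\<close>)
  have "f z - f w - (deriv^^2) f 0 / 2 * (z^2 - w^2) = suminf t"
  proof -
    have "t = (\<lambda>i. e (i+4) * (z^(i+4) - w^(i+4)))" by (simp add: fun_eq_iff t_def)
    with T s4 show ?thesis by (simp add: sums_iff)
  qed
  hence "cmod (f z - f w - (deriv^^2) f 0 / 2 * (z^2 - w^2)) \<le> (\<Sum>i. norm (t i))"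
    using summable_norm[OF sn] by simp
  also have "\<dots> \<le> (\<Sum>i. (41/48) * (1/4)^i * C)"
    by (rule suminf_le) (use B sn sums_summable[OF G] in \<open>auto simp: t_def\<close>)
  also have "\<dots> = 41/36 * C" using G by (simp add: sums_iff)
  finally show ?thesis by (simp add: C_def)
qed


lemma deriv_nonzero:
  fixes f :: "complex \<Rightarrow> complex" and m :: real
  assumes hol: "f holomorphic_on UNIV" and m: "m > 0"
    and low: "\<And>z w. cmod z \<le> 1 \<Longrightarrow> cmod w \<le> 1 \<Longrightarrow> m * cmod (z^2 - w^2) \<le> cmod (f z - f w)"
    and s: "0 < cmod s" "cmod s < 1"
  shows "deriv f s \<noteq> 0"
proof -
  have D: "(f has_field_derivative deriv f s) (at s)"
    using hol by (auto intro: holomorphic_derivI)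
  hence "((\<lambda>y. (f y - f s)/(y - s)) \<longlongrightarrow> deriv f s) (at s)"
    by (simp add: has_field_derivative_iff)
  hence L1: "((\<lambda>y. cmod ((f y - f s)/(y - s))) \<longlongrightarrow> cmod (deriv f s)) (at s)"
    by (rule tendsto_norm)
  have L2: "((\<lambda>y. m * cmod (y + s)) \<longlongrightarrow> m * cmod (s + s)) (at s)"
    by (intro tendsto_intros)
  have ev: "eventually (\<lambda>y. m * cmod (y + s) \<le> cmod ((f y - f s)/(y - s))) (at s)"
    unfolding eventually_at
  proof (intro exI[of _ "1 - cmod s"] conjI ballI impI)
    show "1 - cmod s > 0" using s by simp
    fix y assume "y \<in> UNIV" and y: "y \<noteq> s \<and> dist y s < 1 - cmod s"
    have "cmod y \<le> cmod (y - s) + cmod s" by (metis diff_add_cancel norm_triangle_ineq)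
    hence y1: "cmod y \<le> 1" using y by (simp add: dist_norm)
    have ys: "cmod (y - s) > 0" using y by simp
    have "m * cmod (y + s) * cmod (y - s) = m * cmod (y^2 - s^2)"
      by (simp add: power2_eq_square norm_mult[symmetric] algebra_simps)
    also have "\<dots> \<le> cmod (f y - f s)" using low[OF y1] s by simp
    finally have "m * cmod (y + s) * cmod (y - s) \<le> cmod (f y - f s)" .
    thus "m * cmod (y + s) \<le> cmod ((f y - f s)/(y - s))"
      using ys by (simp add: norm_divide pos_le_divide_eq)
  qed
  have "m * cmod (s + s) \<le> cmod (deriv f s)"
    by (rule tendsto_le[OF _ L1 L2 ev]) simp
  moreover have "m * cmod (s + s) > 0"
  proof -
    have "s + s = 2 * s" by simp
    hence "cmod (s + s) = 2 * cmod s" by (simp add: norm_mult)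
    thus ?thesis using m s by simp
  qed
  ultimately show ?thesis by auto
qed

lemma deriv_even0:
  fixes f :: "complex \<Rightarrow> complex"
  assumes hol: "f holomorphic_on UNIV" and ev: "\<And>z. f (-z) = f z"
  shows "deriv f 0 = 0"
proof -
  have D: "(f has_field_derivative deriv f x) (at x)" for x
    using hol by (auto intro: holomorphic_derivI)
  have "((\<lambda>z. f (-z)) has_field_derivative deriv f (-0) * (-1)) (at 0)"
    by (rule DERIV_chain2[OF D]) (auto intro!: derivative_eq_intros)
  moreover have "(\<lambda>z. f (-z)) = f" using ev by auto
  ultimately have "(f has_field_derivative - deriv f 0) (at 0)" by simp
  with D[of 0] have "deriv f 0 = - deriv f 0" by (rule DERIV_unique)
  thus ?thesis by simp
qed


theorem lemma4p3:
  fixes f :: "complex \<Rightarrow> complex"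
  assumes "in_B f"
    and "B_norm (\<lambda>z. f z - f0 z) < 1/4"
  shows "quadratic_like f (ball 0 1) (f ` ball 0 1)
         \<and> f 0 \<in> complex_of_real ` {..< -1}"
proof -
  from assms(1) have hol: "f holomorphic_on UNIV" and cj: "\<And>z. f (cnj z) = cnj (f z)"
    and ev: "\<And>z. f (-z) = f z" and bnd: "bounded (range (\<lambda>j. (deriv ^^ j) f 0))"
    by (auto simp: in_B_def)
  define a where "a n = (deriv ^^ n) f 0" for n
  define d where "d n = (deriv ^^ n) f0 0" for n
  have dn: "cmod (d n) \<le> 12" for n
    using f0_dn[of n] f0_d0 by (cases "n = 0") (auto simp: d_def)
  have hd: "(deriv ^^ n) (\<lambda>z. f z - f0 z) 0 = a n - d n" for n
    unfolding a_def d_def by (rule higher_deriv_diff[OF hol f0_holo]) auto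
  obtain B where B: "\<And>n. cmod (a n) \<le> B" using bnd unfolding bounded_iff a_def by auto
  have bdd: "bdd_above (range (\<lambda>j. cmod ((deriv ^^ j) (\<lambda>z. f z - f0 z) 0)))"
  proof (rule bdd_aboveI2)
    fix j :: nat
    have "cmod (a j - d j) \<le> cmod (a j) + cmod (d j)" by (rule norm_triangle_ineq4)
    also have "\<dots> \<le> B + 12" using B[of j] dn[of j] by simp
    finally show "cmod ((deriv ^^ j) (\<lambda>z. f z - f0 z) 0) \<le> B + 12" using hd by simp
  qed
  have near: "cmod (a n - d n) < 1/4" for n
  proof -
    have "cmod ((deriv ^^ n) (\<lambda>z. f z - f0 z) 0) \<le> B_norm (\<lambda>z. f z - f0 z)"
      unfolding B_norm_def by (rule cSUP_upper[OF UNIV_I bdd])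
    with assms(2) hd show ?thesis by simp
  qed
  have bd: "cmod ((deriv^^n) f 0) \<le> 41/4" if "n \<ge> 1" for n
  proof -
    have "cmod (a n) = cmod ((a n - d n) + d n)" by simp
    also have "\<dots> \<le> cmod (a n - d n) + cmod (d n)" by (rule norm_triangle_ineq)
    also have "\<dots> \<le> 1/4 + 10" using near[of n] f0_dn[OF that] by (simp add: d_def)
    finally show ?thesis by (simp add: a_def)
  qed
  have a2: "cmod (a 2 - 10) < 1/4" using near[of 2] f0_d2 by (simp add: d_def)
  have a0: "cmod (f 0 + 2) < 1/4" using near[of 0] f0_d0 by (simp add: d_def a_def)
  define c2 where "c2 = a 2 / 2"
  have c2: "cmod c2 \<ge> 39/8"
  proof -
    have "cmod (10::complex) - cmod (a 2) \<le> cmod (10 - a 2)" by (rule norm_triangle_ineq2)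
    also have "\<dots> = cmod (a 2 - 10)" by (rule norm_minus_commute)
    finally have "cmod (a 2) \<ge> 39/4" using a2 by simp
    thus ?thesis by (simp add: c2_def norm_divide)
  qed
  have c2nz: "c2 \<noteq> 0" using c2 by auto
  have K: "cmod (f z - f w - c2 * (z^2 - w^2)) \<le> 41/36 * cmod (z^2 - w^2)"
    if "cmod z \<le> 1" "cmod w \<le> 1" for z w
    using key[OF hol ev bd that] unfolding c2_def a_def by simp
  define m :: real where "m = 269/72"
  have m0: "m > 0" by (simp add: m_def)
  have low: "m * cmod (z^2 - w^2) \<le> cmod (f z - f w)"
    if "cmod z \<le> 1" "cmod w \<le> 1" for z w
  proof -
    define X where "X = z^2 - w^2"
    have "c2 * X = (f z - f w) - (f z - f w - c2 * X)" by simp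
    hence "cmod (c2 * X) \<le> cmod (f z - f w) + cmod (f z - f w - c2 * X)"
      by (metis norm_triangle_ineq4)
    also have "\<dots> \<le> cmod (f z - f w) + 41/36 * cmod X" using K[OF that] by (simp add: X_def)
    finally have "cmod c2 * cmod X \<le> cmod (f z - f w) + 41/36 * cmod X" by (simp add: norm_mult)
    moreover have "39/8 * cmod X \<le> cmod c2 * cmod X" by (intro mult_right_mono c2) simp
    ultimately show ?thesis by (simp add: X_def m_def)
  qed
  have up: "cmod (f z - f w) \<le> (cmod c2 + 41/36) * cmod (z^2 - w^2)"
    if "cmod z \<le> 1" "cmod w \<le> 1" for z w
  proof -
    define X where "X = z^2 - w^2"
    have "f z - f w = c2 * X + (f z - f w - c2 * X)" by simp
    hence "cmod (f z - f w) \<le> cmod (c2 * X) + cmod (f z - f w - c2 * X)"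
      by (metis norm_triangle_ineq)
    also have "\<dots> \<le> cmod (c2 * X) + 41/36 * cmod X" using K[OF that] by (simp add: X_def)
    finally have "cmod (f z - f w) \<le> cmod c2 * cmod X + 41/36 * cmod X" by (simp add: norm_mult)
    thus ?thesis by (simp add: X_def distrib_right)
  qed
  have f0real: "f 0 \<in> complex_of_real ` {..< -1}"
  proof -
    have "f 0 = cnj (f 0)" using cj[of 0] by simp
    hence im: "Im (f 0) = 0" by (metis cnj.simps(2) complex.sel(2) neg_equal_zero)
    have e: "f 0 = complex_of_real (Re (f 0))" using im by (simp add: complex_eq_iff)
    have "\<bar>Re (f 0 + 2)\<bar> \<le> cmod (f 0 + 2)" by (rule abs_Re_le_cmod)
    hence "Re (f 0) < -1" using a0 by simp
    thus ?thesis using e by (intro image_eqI[of _ _ "Re (f 0)"]) auto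
  qed
  have f0b: "cmod (f 0) \<le> 9/4"
  proof -
    have "cmod (f 0) = cmod ((f 0 + 2) - 2)" by simp
    also have "\<dots> \<le> cmod (f 0 + 2) + cmod (2::complex)" by (rule norm_triangle_ineq4)
    finally show ?thesis using a0 by simp
  qed
  define g where "g u = f (csqrt u)" for u
  have gsq: "g (z^2) = f z" for z
  proof -
    have "csqrt (z^2) = z \<or> csqrt (z^2) = -z"
      using power2_eq_iff[of "csqrt (z^2)" z] power2_csqrt[of "z^2"] by blast
    thus ?thesis using ev by (auto simp: g_def)
  qed
  have gK: "cmod (g u - g v - c2 * (u - v)) \<le> 41/36 * cmod (u - v)"
    if "cmod u \<le> 1" "cmod v \<le> 1" for u v
    using K[of "csqrt u" "csqrt v"] that by (simp add: g_def)
  have glow: "m * cmod (u - v) \<le> cmod (g u - g v)"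
    if "cmod u \<le> 1" "cmod v \<le> 1" for u v
    using low[of "csqrt u" "csqrt v"] that by (simp add: g_def)
  have gup: "cmod (g u - g v) \<le> (cmod c2 + 41/36) * cmod (u - v)"
    if "cmod u \<le> 1" "cmod v \<le> 1" for u v
    using up[of "csqrt u" "csqrt v"] that by (simp add: g_def)
  have fball: "f ` ball 0 1 = g ` ball 0 1"
  proof
    show "f ` ball 0 1 \<subseteq> g ` ball 0 1"
    proof
      fix y assume "y \<in> f ` ball 0 1"
      then obtain z where z: "z \<in> ball 0 1" "y = f z" by auto
      have "z^2 \<in> ball 0 1" using z by (simp add: norm_power power_less_one_iff abs_square_less_1)
      thus "y \<in> g ` ball 0 1" using z gsq by (metis image_eqI)
    qed
  next
    show "g ` ball 0 1 \<subseteq> f ` ball 0 1"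
    proof
      fix y assume "y \<in> g ` ball 0 1"
      then obtain u where u: "u \<in> ball 0 1" "y = g u" by auto
      have "csqrt u \<in> ball 0 1" using u by simp
      thus "y \<in> f ` ball 0 1" using u by (auto simp: g_def)
    qed
  qed
  have nc: "\<not> f constant_on UNIV"
  proof
    assume "f constant_on UNIV"
    hence "f 1 = f 0" by (auto simp: constant_on_def)
    thus False using low[of 1 0] m0 by simp
  qed
  have openW: "open (f ` ball 0 1)"
    by (rule open_mapping_thm[OF hol open_UNIV connected_UNIV open_ball _ nc]) auto
  have gcont: "continuous_on (ball 0 1) g"
  proof (rule lipschitz_on_continuous_on)
    show "(cmod c2 + 41/36)-lipschitz_on (ball 0 1) g"
      by (rule lipschitz_onI) (use gup in \<open>auto simp: dist_norm\<close>)
  qed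
  have ginj: "inj_on g (ball 0 1)"
  proof (rule inj_onI)
    fix u v assume "u \<in> ball 0 1" "v \<in> ball 0 1" "g u = g v"
    thus "u = v" using glow[of u v] m0 by (simp add: mult_le_0_iff)
  qed
  obtain h where "homeomorphism (ball 0 1) (g ` ball 0 1) g h"
    by (rule invariance_of_domain_homeomorphism[OF open_ball gcont _ ginj]) auto
  hence "ball (0::complex) 1 homeomorphic g ` ball 0 1" unfolding homeomorphic_def by blast
  hence scW: "simply_connected (f ` ball 0 1)"
    using homeomorphic_simply_connected convex_imp_simply_connected[OF convex_ball] fball by metis
  have cl: "cball 0 1 \<subseteq> f ` ball 0 1"
  proof
    fix w :: complex assume "w \<in> cball 0 1"
    hence w1: "cmod w \<le> 1" by simp
    define T where "T u = u - (g u - w) / c2" for u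
    have Tdiff: "T u - T v = - ((g u - g v - c2 * (u - v)) / c2)" for u v
      using c2nz by (simp add: T_def field_simps)
    have Tlip: "dist (T u) (T v) \<le> 1/4 * dist u v" if "u \<in> cball 0 (9/10)" "v \<in> cball 0 (9/10)" for u v
    proof -
      have u1: "cmod u \<le> 1" and v1: "cmod v \<le> 1" using that by auto
      have "dist (T u) (T v) = cmod (g u - g v - c2 * (u - v)) / cmod c2"
        by (simp add: dist_norm Tdiff norm_divide)
      also have "\<dots> \<le> (41/36 * cmod (u - v)) / cmod c2"
        by (intro divide_right_mono gK u1 v1) simp
      also have "\<dots> \<le> (41/36 * cmod (u - v)) / (39/8)"
        by (intro divide_left_mono c2) (use c2nz in auto)
      also have "\<dots> \<le> 1/4 * dist u v" by (simp add: dist_norm)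
      finally show ?thesis .
    qed
    have T0: "cmod (T 0) \<le> 2/3"
    proof -
      have "T 0 = - ((f 0 - w) / c2)" by (simp add: T_def g_def)
      hence "cmod (T 0) = cmod (f 0 - w) / cmod c2" by (simp add: norm_divide)
      also have "\<dots> \<le> (13/4) / cmod c2"
      proof (intro divide_right_mono)
        have "cmod (f 0 - w) \<le> cmod (f 0) + cmod w" by (rule norm_triangle_ineq4)
        thus "cmod (f 0 - w) \<le> 13/4" using f0b w1 by simp
      qed simp
      also have "\<dots> \<le> (13/4) / (39/8)" by (intro divide_left_mono c2) (use c2nz in auto)
      finally show ?thesis by simp
    qed
    have Tmap: "T ` cball 0 (9/10) \<subseteq> cball 0 (9/10)"
    proof
      fix y assume "y \<in> T ` cball 0 (9/10)"
      then obtain u where u: "u \<in> cball 0 (9/10)" "y = T u" by auto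
      have "cmod (T u) \<le> cmod (T u - T 0) + cmod (T 0)" by (metis diff_add_cancel norm_triangle_ineq)
      also have "\<dots> \<le> 1/4 * cmod u + 2/3" using Tlip[OF u(1), of 0] T0 by (simp add: dist_norm)
      also have "\<dots> \<le> 9/10" using u(1) by simp
      finally show "y \<in> cball 0 (9/10)" using u by simp
    qed
    have "\<exists>!x\<in>cball 0 (9/10). T x = x"
      by (rule Banach_fix[where c="1/4"]) (use Tmap Tlip in \<open>auto simp: complete_eq_closed\<close>)
    then obtain u where u: "u \<in> cball 0 (9/10)" "T u = u" by auto
    hence "(g u - w) / c2 = 0" by (simp add: T_def)
    hence gu: "g u = w" using c2nz by simp
    have "csqrt u \<in> ball 0 1" using u(1) by simp
    thus "w \<in> f ` ball 0 1" using gu by (auto simp: g_def)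
  qed
  have contf: "continuous (at x) f" for x
    using hol holomorphic_on_imp_continuous_on continuous_on_eq_continuous_at open_UNIV by blast
  have prp: "compact {z \<in> ball 0 1. f z \<in> K}" if K: "compact K" "K \<subseteq> f ` ball 0 1" for K
  proof -
    have eq: "{z \<in> ball 0 1. f z \<in> K} = cball 0 1 \<inter> f -` K"
    proof
      show "{z \<in> ball 0 1. f z \<in> K} \<subseteq> cball 0 1 \<inter> f -` K" by auto
    next
      show "cball 0 1 \<inter> f -` K \<subseteq> {z \<in> ball 0 1. f z \<in> K}"
      proof
        fix z assume z: "z \<in> cball 0 1 \<inter> f -` K"
        then obtain z' where z': "z' \<in> ball 0 1" "f z = f z'" using K by auto
        have "m * cmod (z^2 - z'^2) \<le> 0" using low[of z z'] z z' by simp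
        hence "z^2 = z'^2" using m0 by (simp add: mult_le_0_iff)
        hence "cmod z ^2 = cmod z' ^2" by (metis norm_power)
        hence "cmod z = cmod z'" by simp
        thus "z \<in> {z \<in> ball 0 1. f z \<in> K}" using z z' by simp
      qed
    qed
    have "closed (f -` K)" by (rule continuous_closed_vimage[OF compact_imp_closed[OF K(1)] contf])
    thus ?thesis unfolding eq by (intro compact_Int_closed compact_cball)
  qed
  have hF: "(deriv ^^ n) (\<lambda>x. f x - w) z = (deriv ^^ n) f z - (if n = 0 then w else 0)" for n z w
    by (simp add: higher_deriv_diff[OF hol holomorphic_on_const open_UNIV UNIV_I])
  have holF: "(\<lambda>x. f x - w) holomorphic_on UNIV" for w
    using hol by (intro holomorphic_intros)
  have z1: "zorder (\<lambda>x. f x - w) s = 1" if s: "0 < cmod s" "cmod s < 1" "f s = w" for s w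
  proof (rule zorder_zero_eqI[OF holF open_UNIV UNIV_I])
    show "(deriv ^^ i) (\<lambda>x. f x - w) s = 0" if "i < nat 1" for i
      using that s hF by simp
    show "(deriv ^^ nat 1) (\<lambda>x. f x - w) s \<noteq> 0"
      using hF[of 1] deriv_nonzero[OF hol m0 low s(1,2)] by simp
  qed simp
  have z2: "zorder (\<lambda>x. f x - f 0) 0 = 2"
  proof (rule zorder_zero_eqI[OF holF open_UNIV UNIV_I])
    show "(deriv ^^ i) (\<lambda>x. f x - f 0) 0 = 0" if "i < nat 2" for i
    proof -
      have "i = 0 \<or> i = 1" using that by auto
      thus ?thesis using hF deriv_even0[OF hol ev] by auto
    qed
    have "a 2 \<noteq> 0" using c2nz by (simp add: c2_def)
    thus "(deriv ^^ nat 2) (\<lambda>x. f x - f 0) 0 \<noteq> 0" using hF[of 2] by (simp add: a_def)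
  qed simp
  have deg: "finite {z \<in> ball 0 1. f z = w} \<and> (\<Sum>z\<in>{z \<in> ball 0 1. f z = w}. zorder (\<lambda>x. f x - w) z) = 2"
    if wW: "w \<in> f ` ball 0 1" for w
  proof -
    obtain z0 where z0: "z0 \<in> ball 0 1" "w = f z0" using wW by auto
    have P: "{z \<in> ball 0 1. f z = w} = {z0, -z0}"
    proof
      show "{z \<in> ball 0 1. f z = w} \<subseteq> {z0, -z0}"
      proof
        fix z assume z: "z \<in> {z \<in> ball 0 1. f z = w}"
        have "m * cmod (z^2 - z0^2) \<le> 0" using low[of z z0] z z0 by simp
        hence "z^2 = z0^2" using m0 by (simp add: mult_le_0_iff)
        thus "z \<in> {z0, -z0}" by (simp add: power2_eq_iff)
      qed
    next
      show "{z0, -z0} \<subseteq> {z \<in> ball 0 1. f z = w}" using z0 ev by auto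
    qed
    show ?thesis
    proof (cases "z0 = 0")
      case True
      hence "{z \<in> ball 0 1. f z = w} = {0}" using P by simp
      thus ?thesis using z2 z0 True by simp
    next
      case False
      have ne: "z0 \<noteq> -z0"
      proof
        assume "z0 = -z0"
        hence "2 * z0 = 0" by simp
        thus False using False by simp
      qed
      have "zorder (\<lambda>x. f x - w) z0 = 1" using z1[of z0 w] z0 False by simp
      moreover have "zorder (\<lambda>x. f x - w) (-z0) = 1" using z1[of "-z0" w] z0 False ev by simp
      ultimately show ?thesis using P ne by simp
    qed
  qed
  have "quadratic_like f (ball 0 1) (f ` ball 0 1)"
    unfolding quadratic_like_def
  proof (intro conjI)
    show "ball (0::complex) 1 \<noteq> {}" by simp
    show "f ` ball 0 1 \<noteq> {}" by simp
    show "open (ball (0::complex) 1)" by simp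
    show "open (f ` ball 0 1)" by (rule openW)
    show "simply_connected (ball (0::complex) 1)" by (rule convex_imp_simply_connected) simp
    show "simply_connected (f ` ball 0 1)" by (rule scW)
    show "compact (closure (ball (0::complex) 1))" by simp
    show "closure (ball 0 1) \<subseteq> f ` ball 0 1" using cl by simp
    show "f holomorphic_on ball 0 1" using hol by (rule holomorphic_on_subset) simp
    show "f ` ball 0 1 \<subseteq> f ` ball 0 1" by simp
    show "\<forall>K. compact K \<and> K \<subseteq> f ` ball 0 1 \<longrightarrow> compact {z \<in> ball 0 1. f z \<in> K}"
      using prp by blast
    show "\<forall>w\<in>f ` ball 0 1. finite {z \<in> ball 0 1. f z = w} \<and>
        (\<Sum>z\<in>{z \<in> ball 0 1. f z = w}. zorder (\<lambda>x. f x - w) z) = 2"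
      using deg by blast
  qed
  thus ?thesis using f0real by blast
qed

end
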